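(* Let $\{z_n\}_{n\ge 0}$ be a sequence of positive real numbers satisfying $a_nz_{n+1}=b_nz_n+c_nz_{n-1}$ for all $n\ge 1$, where $a_n,b_n,c_n>0$, and let $\lambda_n=\frac{b_n+\sqrt{b_n^2+4a_nc_n}}{2a_n}$ for $n\ge 1$. Suppose there exists a sequence $\{\mu_n\}_{n\ge 1}$ of positive reals such that: (i) $\mu_n\le \lambda_n$ for all $n\ge 1$; (ii) $z_1\le \mu_1z_0$ and $z_2\le \mu_2z_1$; (iii) $a_n\mu_{n-1}\mu_{n+1}\ge b_n\mu_{n-1}+c_n$ for all $n\ge 2$. Then $\{z_n\}_{n\ge 0}$ is log-convex.
   Context: A sequence $a_0,a_1,\ldots$ of nonnegative real numbers is log-convex if $a_{k-1}a_{k+1}\ge a_k^2$ for all $k\ge 1$. *)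

theory Defs
  imports Complex_Main
begin

definition log_convex :: "(nat \<Rightarrow> real) \<Rightarrow> bool" where
  "log_convex a \<longleftrightarrow> (\<forall>k. a k \<ge> 0) \<and> (\<forall>k\<ge>1. a (k - 1) * a (k + 1) \<ge> (a k)\<^sup>2)"

end

theory Submission
  imports Defs
begin

lemma quad_bound:
  fixes A B C m :: real
  assumes "A > 0" "B > 0" "C > 0" "m > 0"
    and "m \<le> (B + sqrt (B\<^sup>2 + 4 * A * C)) / (2 * A)"
  shows "A * m\<^sup>2 \<le> B * m + C"
proof (cases "2 * A * m - B \<le> 0")
  case True
  then have "m * (A * m - B) \<le> 0" using assms
    by (intro mult_nonneg_nonpos) auto
  moreover have "A * m\<^sup>2 - B * m = m * (A * m - B)" by (simp add: power2_eq_square algebra_simps)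
  ultimately show ?thesis using assms by linarith
next
  case False
  have s: "2 * A * m - B \<le> sqrt (B\<^sup>2 + 4 * A * C)"
    using assms by (simp add: field_simps)
  have "(2 * A * m - B)\<^sup>2 \<le> (sqrt (B\<^sup>2 + 4 * A * C))\<^sup>2"
    using False s by (intro power_mono) auto
  also have "\<dots> = B\<^sup>2 + 4 * A * C" using assms by simp
  finally have "4 * A * (A * m\<^sup>2 - B * m - C) \<le> 0"
    by (simp add: power2_eq_square algebra_simps)
  then have "A * m\<^sup>2 - B * m - C \<le> 0" using assms
    by (simp add: mult_le_0_iff)
  then show ?thesis by simp
qed

theorem theorem3p4:
  fixes z a b c mu :: "nat \<Rightarrow> real"
  assumes z_pos: "\<And>n. z n > 0"
    and abc_pos: "\<And>n. n \<ge> 1 \<Longrightarrow> a n > 0 \<and> b n > 0 \<and> c n > 0"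
    and rec: "\<And>n. n \<ge> 1 \<Longrightarrow> a n * z (n + 1) = b n * z n + c n * z (n - 1)"
    and mu_pos: "\<And>n. n \<ge> 1 \<Longrightarrow> mu n > 0"
    and i: "\<And>n. n \<ge> 1 \<Longrightarrow> mu n \<le> (b n + sqrt ((b n)\<^sup>2 + 4 * a n * c n)) / (2 * a n)"
    and ii: "z 1 \<le> mu 1 * z 0" "z 2 \<le> mu 2 * z 1"
    and iii: "\<And>n. n \<ge> 2 \<Longrightarrow> a n * mu (n - 1) * mu (n + 1) \<ge> b n * mu (n - 1) + c n"
  shows "log_convex z"
proof -
  have A: "mu n * z n \<le> z (n + 1)" if n: "n \<ge> 1" and h: "z n \<le> mu n * z (n - 1)" for n
  proof -
    have p: "a n > 0" "b n > 0" "c n > 0" "mu n > 0" using abc_pos[OF n] mu_pos[OF n] by auto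
    have q: "a n * (mu n)\<^sup>2 \<le> b n * mu n + c n"
      using quad_bound[OF p i[OF n]] .
    have "c n * z n \<le> c n * mu n * z (n - 1)" using h p by (simp add: mult_left_mono mult.assoc)
    have "mu n * (a n * (mu n * z n)) = (a n * (mu n)\<^sup>2) * z n"
      by (simp add: power2_eq_square)
    also have "\<dots> \<le> (b n * mu n + c n) * z n" using mult_right_mono[OF q less_imp_le[OF z_pos[of n]]] .
    also have "\<dots> = mu n * (b n * z n) + c n * z n" by (simp add: algebra_simps)
    also have "\<dots> \<le> mu n * (b n * z n) + c n * mu n * z (n - 1)"
      using \<open>c n * z n \<le> c n * mu n * z (n - 1)\<close> by simp
    also have "\<dots> = mu n * (a n * z (n + 1))" using rec[OF n] by (simp add: algebra_simps)
    finally have "a n * (mu n * z n) \<le> a n * z (n + 1)" using p by simp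
    then show ?thesis using p by simp
  qed
  have B: "z (n + 1) \<le> mu (n + 1) * z n" if n: "n \<ge> 2" and h: "mu (n - 1) * z (n - 1) \<le> z n" for n
  proof -
    have n1: "n \<ge> 1" using n by simp
    have p: "a n > 0" "b n > 0" "c n > 0" "mu (n - 1) > 0" using abc_pos[OF n1] mu_pos[of "n-1"] n by auto
    have "mu (n - 1) * (a n * z (n + 1)) = mu (n - 1) * (b n * z n) + c n * (mu (n - 1) * z (n - 1))"
      using rec[OF n1] by (simp add: algebra_simps)
    also have "\<dots> \<le> mu (n - 1) * (b n * z n) + c n * z n"
      using h p by (simp add: mult_left_mono)
    also have "\<dots> = (b n * mu (n - 1) + c n) * z n" by (simp add: algebra_simps)
    also have "\<dots> \<le> (a n * mu (n - 1) * mu (n + 1)) * z n"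
      using mult_right_mono[OF iii[OF n] less_imp_le[OF z_pos[of n]]] .
    also have "\<dots> = mu (n - 1) * (a n * (mu (n + 1) * z n))" by (simp add: algebra_simps)
    finally have "a n * z (n + 1) \<le> a n * (mu (n + 1) * z n)" using p by simp
    then show ?thesis using p by simp
  qed
  define Q where "Q n \<longleftrightarrow> z (n + 1) \<le> mu (n + 1) * z n \<and> mu (n + 1) * z (n + 1) \<le> z (n + 2)" for n
  have Q0: "Q 0" using ii(1) A[of 1] by (simp add: Q_def)
  have Q1: "Q 1" using ii(2) A[of 2] by (simp add: Q_def numeral_2_eq_2)
  have "Q n \<and> Q (Suc n)" for n
  proof (induction n)
    case 0 then show ?case using Q0 Q1 by simp
  next
    case (Suc n)
    then have h: "mu (n + 1) * z (n + 1) \<le> z (n + 2)" by (simp add: Q_def)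
    have f: "z (n + 3) \<le> mu (n + 3) * z (n + 2)"
      using B[of "n + 2"] h by (simp add: numeral_3_eq_3 numeral_2_eq_2)
    have g: "mu (n + 3) * z (n + 3) \<le> z (n + 4)"
      using A[of "n + 3"] f by (simp add: numeral_3_eq_3 numeral_2_eq_2 eval_nat_numeral)
    have "Q (Suc (Suc n))" unfolding Q_def using f g
      by (simp add: numeral_3_eq_3 numeral_2_eq_2 eval_nat_numeral)
    then show ?case using Suc by simp
  qed
  then have Qall: "Q n" for n by simp
  show ?thesis unfolding log_convex_def
  proof (intro conjI allI impI)
    fix k :: nat show "z k \<ge> 0" using z_pos[of k] by simp
  next
    fix k :: nat assume k: "k \<ge> 1"
    then obtain m where m: "k = m + 1" by (metis add.commute le_Suc_ex)
    have q: "z (m + 1) \<le> mu (m + 1) * z m" "mu (m + 1) * z (m + 1) \<le> z (m + 2)"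
      using Qall[of m] by (auto simp: Q_def)
    have "(z (m + 1))\<^sup>2 = z (m + 1) * z (m + 1)" by (simp add: power2_eq_square)
    also have "\<dots> \<le> (mu (m + 1) * z m) * z (m + 1)"
      using mult_right_mono[OF q(1) less_imp_le[OF z_pos[of "m+1"]]] .
    also have "\<dots> = z m * (mu (m + 1) * z (m + 1))" by (simp add: algebra_simps)
    also have "\<dots> \<le> z m * z (m + 2)" using q(2) z_pos[of m] by (simp add: mult_left_mono)
    finally show "z (k - 1) * z (k + 1) \<ge> (z k)\<^sup>2" using m by (simp add: add.assoc)
  qed
qed

end
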